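(* For every ProbNetKAT program $p$, every input $a\subseteq\mathsf{Pk}$ and every set $A\subseteq 2^{\mathsf{Pk}}$, \[ [\![p^*]\!](a)(A) = \lim_{n\to\infty}[\![p^{(n)}]\!](a)(A). \]
   Context: Fix finitely many fields each ranging over a finite set of naturals; a packet $\pi$ assigns a value $\pi.f$ to each field $f$, $\pi[f:=n]$ updates field $f$; $\mathsf{Pk}$ is the finite set of packets. ProbNetKAT predicates: $t::=\mathsf{false}\mid\mathsf{true}\mid f=n\mid t\,\&\,u\mid t;u\mid\neg t$; programs: $p::=t\mid f\leftarrow n\mid p\,\&\,q\mid p;q\mid p\oplus_r q\mid p^*$ ($r\in[0,1]\cap\mathbb{Q}$). $p^{(0)}=\mathsf{true}$, $p^{(n+1)}=\mathsf{true}\,\&\,(p;p^{(n)})$. Denotational semantics $[\![p]\!]:2^{\mathsf{Pk}}\to\mathcal{D}(2^{\mathsf{Pk}})$, where $\mathcal{D}(X)$ is the set of probability distributions on finite $X$, $\delta_x$ is Dirac, $\mathcal{D}(g)(\mu)=\mu\circ g^{-1}$, $g^\dagger(\mu)(A)=\sum_x g(x)(A)\mu(x)$, $\mu\times\nu$ product, and $\mu\sqsubseteq\nu$ iff $\mu(\{b:c\subseteq b\})\le\nu(\{b:c\subseteq b\})$ for all $c\subseteq\mathsf{Pk}$: $[\![\mathsf{false}]\!](a)=\delta_\emptyset$; $[\![\mathsf{true}]\!](a)=\delta_a$; $[\![f=n]\!](a)=\delta_{\{\pi\in a:\pi.f=n\}}$; $[\![f\leftarrow n]\!](a)=\delta_{\{\pi[f:=n]:\pi\in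 a\}}$; $[\![\neg t]\!](a)=\mathcal{D}(\lambda b.a-b)([\![t]\!](a))$; $[\![p\,\&\,q]\!](a)=\mathcal{D}(\cup)([\![p]\!](a)\times[\![q]\!](a))$; $[\![p;q]\!](a)=[\![q]\!]^\dagger([\![p]\!](a))$; $[\![p\oplus_r q]\!](a)=r[\![p]\!](a)+(1-r)[\![q]\!](a)$; $[\![p^*]\!](a)=\bigsqcup_n[\![p^{(n)}]\!](a)$, the $\sqsubseteq$-supremum of the increasing chain $([\![p^{(n)}]\!](a))_n$. *)

theory Defs
  imports "HOL-Probability.Probability_Mass_Function"
begin

(* Fields are elements of a finite type 'f; field f ranges over the finite set R f of naturals.
   A packet is a function 'f => nat; Pk R is the (finite) set of packets respecting the ranges. *)

type_synonym 'f packet = "'f \<Rightarrow> nat"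

definition Pk :: "('f \<Rightarrow> nat set) \<Rightarrow> 'f packet set" where
  "Pk R = {\<pi>. \<forall>f. \<pi> f \<in> R f}"

definition valid_ranges :: "('f::finite \<Rightarrow> nat set) \<Rightarrow> bool" where
  "valid_ranges R \<longleftrightarrow> (\<forall>f. finite (R f))"

datatype 'f pred =
    PFalse
  | PTrue
  | PTest 'f nat
  | PAnd "'f pred" "'f pred"
  | PSeq "'f pred" "'f pred"
  | PNeg "'f pred"

datatype 'f prog =
    Test "'f pred"
  | Assign 'f nat
  | Par "'f prog" "'f prog"
  | Seq "'f prog" "'f prog"
  | Choice "'f prog" rat "'f prog"
  | Star "'f prog"

primrec wf_pred :: "('f \<Rightarrow> nat set) \<Rightarrow> 'f pred \<Rightarrow> bool" where
  "wf_pred R PFalse = True"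
| "wf_pred R PTrue = True"
| "wf_pred R (PTest f n) = (n \<in> R f)"
| "wf_pred R (PAnd t u) = (wf_pred R t \<and> wf_pred R u)"
| "wf_pred R (PSeq t u) = (wf_pred R t \<and> wf_pred R u)"
| "wf_pred R (PNeg t) = wf_pred R t"

primrec wf_prog :: "('f \<Rightarrow> nat set) \<Rightarrow> 'f prog \<Rightarrow> bool" where
  "wf_prog R (Test t) = wf_pred R t"
| "wf_prog R (Assign f n) = (n \<in> R f)"
| "wf_prog R (Par p q) = (wf_prog R p \<and> wf_prog R q)"
| "wf_prog R (Seq p q) = (wf_prog R p \<and> wf_prog R q)"
| "wf_prog R (Choice p r q) = (wf_prog R p \<and> 0 \<le> r \<and> r \<le> 1 \<and> wf_prog R q)"
| "wf_prog R (Star p) = wf_prog R p"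

primrec ppow :: "'f prog \<Rightarrow> nat \<Rightarrow> 'f prog" where
  "ppow p 0 = Test PTrue"
| "ppow p (Suc n) = Par (Test PTrue) (Seq p (ppow p n))"

definition Dist :: "('f \<Rightarrow> nat set) \<Rightarrow> 'f packet set pmf set" where
  "Dist R = {\<mu>. set_pmf \<mu> \<subseteq> Pow (Pk R)}"

definition dle :: "('f \<Rightarrow> nat set) \<Rightarrow> 'f packet set pmf \<Rightarrow> 'f packet set pmf \<Rightarrow> bool" where
  "dle R \<mu> \<nu> \<longleftrightarrow> (\<forall>c \<subseteq> Pk R. measure_pmf.prob \<mu> {b. c \<subseteq> b} \<le> measure_pmf.prob \<nu> {b. c \<subseteq> b})"

definition dsup :: "('f \<Rightarrow> nat set) \<Rightarrow> (nat \<Rightarrow> 'f packet set pmf) \<Rightarrow> 'f packet set pmf" where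
  "dsup R M = (THE \<mu>. \<mu> \<in> Dist R \<and> (\<forall>n. dle R (M n) \<mu>)
                 \<and> (\<forall>\<nu> \<in> Dist R. (\<forall>n. dle R (M n) \<nu>) \<longrightarrow> dle R \<mu> \<nu>))"

primrec star_approx :: "('f packet set \<Rightarrow> 'f packet set pmf) \<Rightarrow> nat \<Rightarrow> 'f packet set \<Rightarrow> 'f packet set pmf" where
  "star_approx S 0 a = return_pmf a"
| "star_approx S (Suc n) a =
     map_pmf (\<lambda>(x, y). x \<union> y) (pair_pmf (return_pmf a) (bind_pmf (S a) (star_approx S n)))"

primrec sem_pred :: "'f pred \<Rightarrow> 'f packet set \<Rightarrow> 'f packet set pmf" where
  "sem_pred PFalse a = return_pmf {}"
| "sem_pred PTrue a = return_pmf a"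
| "sem_pred (PTest f n) a = return_pmf {\<pi> \<in> a. \<pi> f = n}"
| "sem_pred (PAnd t u) a = map_pmf (\<lambda>(x, y). x \<union> y) (pair_pmf (sem_pred t a) (sem_pred u a))"
| "sem_pred (PSeq t u) a = bind_pmf (sem_pred t a) (sem_pred u)"
| "sem_pred (PNeg t) a = map_pmf (\<lambda>b. a - b) (sem_pred t a)"

(* Choice: r*[[p]](a) + (1-r)*[[q]](a), realised as the mixture via a Bernoulli coin *)
primrec sem :: "('f \<Rightarrow> nat set) \<Rightarrow> 'f prog \<Rightarrow> 'f packet set \<Rightarrow> 'f packet set pmf" where
  "sem R (Test t) a = sem_pred t a"
| "sem R (Assign f n) a = return_pmf {\<pi>(f := n) | \<pi>. \<pi> \<in> a}"
| "sem R (Par p q) a = map_pmf (\<lambda>(x, y). x \<union> y) (pair_pmf (sem R p a) (sem R q a))"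
| "sem R (Seq p q) a = bind_pmf (sem R p a) (sem R q)"
| "sem R (Choice p r q) a =
     bind_pmf (bernoulli_pmf (real_of_rat r)) (\<lambda>b. if b then sem R p a else sem R q a)"
| "sem R (Star p) a = dsup R (\<lambda>n. star_approx (sem R p) n a)"

end

theory Submission
  imports Defs
begin

lemma bind_mono_prob:
  assumes "\<And>x. measure_pmf.prob (f x) A \<le> measure_pmf.prob (g x) A"
  shows "measure_pmf.prob (bind_pmf M f) A \<le> measure_pmf.prob (bind_pmf M g) A"
proof -
  have "emeasure (measure_pmf (bind_pmf M f)) A \<le> emeasure (measure_pmf (bind_pmf M g)) A"
    unfolding emeasure_bind_pmf
    by (intro nn_integral_mono) (simp add: measure_pmf.emeasure_eq_measure assms)
  then show ?thesis by (simp add: measure_pmf.emeasure_eq_measure)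
qed

lemma union_pair_prob:
  "measure_pmf.prob (map_pmf (\<lambda>(x, y). x \<union> y) (pair_pmf (return_pmf a) X)) {b. c \<subseteq> b}
   = measure_pmf.prob X {b. c - a \<subseteq> b}"
proof -
  have "(\<lambda>(x, y). x \<union> y) \<circ> Pair a = (\<lambda>y. a \<union> y)" by auto
  moreover have "(\<lambda>y. a \<union> y) -` {b. c \<subseteq> b} = {b. c - a \<subseteq> b}" by auto
  ultimately show ?thesis by (simp add: pair_return_pmf1 map_pmf_comp)
qed

lemma star_approx_mono:
  "measure_pmf.prob (star_approx S n a) {b. c \<subseteq> b}
     \<le> measure_pmf.prob (star_approx S (Suc n) a) {b. c \<subseteq> b}"
proof (induction n arbitrary: a c)
  case 0
  show ?case
  proof (cases "c \<subseteq> a")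
    case True
    then have "{b. c - a \<subseteq> b} = UNIV" by auto
    then show ?thesis using True unfolding star_approx.simps union_pair_prob by simp
  next
    case False
    then show ?thesis unfolding star_approx.simps union_pair_prob by simp
  qed
next
  case (Suc n)
  show ?case
    unfolding star_approx.simps(2) union_pair_prob
    by (rule bind_mono_prob) (use Suc in \<open>simp only: star_approx.simps\<close>)
qed

lemma star_approx_supp:
  assumes "\<And>x. x \<subseteq> P \<Longrightarrow> set_pmf (S x) \<subseteq> Pow P"
  shows "a \<subseteq> P \<Longrightarrow> set_pmf (star_approx S n a) \<subseteq> Pow P"
proof (induction n arbitrary: a)
  case 0
  then show ?case by simp
next
  case (Suc n)
  have "set_pmf (bind_pmf (S a) (star_approx S n)) \<subseteq> Pow P"
  proof
    fix x assume "x \<in> set_pmf (bind_pmf (S a) (star_approx S n))"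
    then obtain y where y: "y \<in> set_pmf (S a)" "x \<in> set_pmf (star_approx S n y)" by auto
    have "y \<subseteq> P" using y(1) assms[OF Suc.prems] by auto
    then show "x \<in> Pow P" using Suc.IH y(2) by auto
  qed
  then show ?case using Suc.prems by (auto simp: set_pair_pmf)
qed

lemma prob_restrict:
  assumes "set_pmf M \<subseteq> S"
  shows "measure_pmf.prob M A = measure_pmf.prob M (A \<inter> S)"
proof -
  have "measure_pmf.prob M (A \<inter> S) = measure_pmf.prob M (A \<inter> S \<inter> set_pmf M)"
    by (rule measure_Int_set_pmf[symmetric])
  also have "A \<inter> S \<inter> set_pmf M = A \<inter> set_pmf M" using assms by auto
  finally show ?thesis by (simp add: measure_Int_set_pmf)
qed

lemma up_identity:
  assumes "finite P" "set_pmf M \<subseteq> Pow P" "b \<subseteq> P"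
  shows "measure_pmf.prob M {x. b \<subseteq> x} = pmf M b + (\<Sum>b'\<in>{b'. b \<subset> b' \<and> b' \<subseteq> P}. pmf M b')"
proof -
  have e: "{x. b \<subseteq> x} \<inter> Pow P = insert b {b'. b \<subset> b' \<and> b' \<subseteq> P}" using assms(3) by auto
  have f: "finite {b'. b \<subset> b' \<and> b' \<subseteq> P}" using assms(1) by (rule rev_finite_subset[OF finite_Pow_iff[THEN iffD2]]) auto
  have "measure_pmf.prob M {x. b \<subseteq> x} = measure_pmf.prob M ({x. b \<subseteq> x} \<inter> Pow P)"
    by (rule prob_restrict[OF assms(2)])
  also have "\<dots> = pmf M b + (\<Sum>b'\<in>{b'. b \<subset> b' \<and> b' \<subseteq> P}. pmf M b')"
    unfolding e using f by (simp add: measure_measure_pmf_finite)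
  finally show ?thesis .
qed

lemma card_less:
  assumes "finite P" "b \<subset> b'" "b' \<subseteq> P"
  shows "card (P - b') < card (P - b)"
  using assms by (intro psubset_card_mono) auto

lemma pmf_conv:
  assumes "finite P" "\<And>n. set_pmf (M n) \<subseteq> Pow P"
    and "\<And>c. c \<subseteq> P \<Longrightarrow> convergent (\<lambda>n. measure_pmf.prob (M n) {x. c \<subseteq> x})"
  shows "b \<subseteq> P \<Longrightarrow> convergent (\<lambda>n. pmf (M n) b)"
proof (induction "card (P - b)" arbitrary: b rule: less_induct)
  case less
  have eq: "(\<lambda>n. pmf (M n) b) = (\<lambda>n. measure_pmf.prob (M n) {x. b \<subseteq> x}
            - (\<Sum>b'\<in>{b'. b \<subset> b' \<and> b' \<subseteq> P}. pmf (M n) b'))"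
    using up_identity[OF assms(1,2) less.prems] by auto
  have "convergent (\<lambda>n. \<Sum>b'\<in>{b'. b \<subset> b' \<and> b' \<subseteq> P}. pmf (M n) b')"
    by (rule convergent_sum) (use less card_less[OF assms(1)] in auto)
  then show ?case unfolding eq
    by (intro convergent_diff assms(3) less.prems)
qed

lemma pmf_antisym:
  assumes "finite P" "set_pmf M \<subseteq> Pow P" "set_pmf N \<subseteq> Pow P"
    and "\<And>c. c \<subseteq> P \<Longrightarrow> measure_pmf.prob M {x. c \<subseteq> x} = measure_pmf.prob N {x. c \<subseteq> x}"
  shows "b \<subseteq> P \<Longrightarrow> pmf M b = pmf N b"
proof (induction "card (P - b)" arbitrary: b rule: less_induct)
  case less
  have "(\<Sum>b'\<in>{b'. b \<subset> b' \<and> b' \<subseteq> P}. pmf M b') = (\<Sum>b'\<in>{b'. b \<subset> b' \<and> b' \<subseteq> P}. pmf N b')"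
    by (rule sum.cong) (use less card_less[OF assms(1)] in auto)
  then show ?case
    using up_identity[OF assms(1,2) less.prems] up_identity[OF assms(1,3) less.prems]
      assms(4)[OF less.prems] by linarith
qed

lemma finite_Pk:
  fixes R :: "'f::finite \<Rightarrow> nat set"
  assumes "valid_ranges R"
  shows "finite (Pk R)"
proof -
  have "Pk R = PiE UNIV R" unfolding Pk_def PiE_def Pi_def extensional_def by auto
  then show ?thesis using assms unfolding valid_ranges_def by (simp add: finite_PiE)
qed

lemma chain_lemma:
  assumes fin: "finite (Pk R)"
    and supp: "\<And>n. set_pmf (M n) \<subseteq> Pow (Pk R)"
    and mono: "\<And>n c. measure_pmf.prob (M n) {b. c \<subseteq> b} \<le> measure_pmf.prob (M (Suc n)) {b. c \<subseteq> b}"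
  shows "dsup R M \<in> Dist R \<and> (\<forall>A. (\<lambda>n. measure_pmf.prob (M n) A) \<longlonglongrightarrow> measure_pmf.prob (dsup R M) A)"
proof -
  define P where "P = Pk R"
  have finP: "finite P" using fin P_def by simp
  have suppP: "\<And>n. set_pmf (M n) \<subseteq> Pow P" using supp P_def by simp
  have inc: "\<And>c. incseq (\<lambda>n. measure_pmf.prob (M n) {b. c \<subseteq> b})"
    by (rule incseq_SucI) (rule mono)
  have upconv: "\<And>c. convergent (\<lambda>n. measure_pmf.prob (M n) {b. c \<subseteq> b})"
  proof -
    fix c
    have "bdd_above (range (\<lambda>n. measure_pmf.prob (M n) {b. c \<subseteq> b}))"
      by (intro bdd_aboveI[where M=1]) auto
    then show "convergent (\<lambda>n. measure_pmf.prob (M n) {b. c \<subseteq> b})"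
      using LIMSEQ_incseq_SUP[OF _ inc] unfolding convergent_def by blast
  qed
  have pconv: "\<And>b. b \<subseteq> P \<Longrightarrow> convergent (\<lambda>n. pmf (M n) b)"
    by (rule pmf_conv[OF finP suppP upconv])
  define m where "m b = (if b \<subseteq> P then lim (\<lambda>n. pmf (M n) b) else 0)" for b
  have mlim: "\<And>b. b \<subseteq> P \<Longrightarrow> (\<lambda>n. pmf (M n) b) \<longlonglongrightarrow> m b"
    unfolding m_def using pconv by (simp add: convergent_LIMSEQ_iff)
  have mnn: "\<And>b. 0 \<le> m b"
  proof -
    fix b show "0 \<le> m b"
    proof (cases "b \<subseteq> P")
      case True
      show ?thesis by (rule LIMSEQ_le_const[OF mlim[OF True]]) auto
    next
      case False then show ?thesis by (simp add: m_def)
    qed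
  qed
  have finPow: "finite (Pow P)" using finP by simp
  have sum1: "(\<Sum>b\<in>Pow P. m b) = 1"
  proof -
    have "(\<lambda>n. \<Sum>b\<in>Pow P. pmf (M n) b) \<longlonglongrightarrow> (\<Sum>b\<in>Pow P. m b)"
      by (rule tendsto_sum) (use mlim in auto)
    moreover have "(\<lambda>n. \<Sum>b\<in>Pow P. pmf (M n) b) = (\<lambda>n. 1)"
      using sum_pmf_eq_1[OF finPow suppP] by simp
    ultimately have "(\<lambda>n. 1::real) \<longlonglongrightarrow> (\<Sum>b\<in>Pow P. m b)" by simp
    then show ?thesis using LIMSEQ_unique[OF _ tendsto_const] by metis
  qed
  have nn1: "(\<integral>\<^sup>+x. ennreal (m x) \<partial>count_space UNIV) = 1"
  proof -
    have "(\<integral>\<^sup>+x. ennreal (m x) \<partial>count_space UNIV) = (\<Sum>x\<in>Pow P. ennreal (m x))"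
      by (rule nn_integral_count_space'[OF finPow]) (auto simp: m_def)
    also have "\<dots> = ennreal (\<Sum>x\<in>Pow P. m x)" by (rule sum_ennreal) (simp add: mnn)
    finally show ?thesis using sum1 by simp
  qed
  define \<mu> where "\<mu> = embed_pmf m"
  have pmfmu: "\<And>b. pmf \<mu> b = m b" unfolding \<mu>_def by (rule pmf_embed_pmf[OF mnn nn1])
  have suppmu: "set_pmf \<mu> \<subseteq> Pow P"
  proof
    fix x assume "x \<in> set_pmf \<mu>"
    then have "m x \<noteq> 0" by (simp add: set_pmf_iff pmfmu)
    then show "x \<in> Pow P" by (auto simp: m_def split: if_splits)
  qed
  have conv: "\<And>A. (\<lambda>n. measure_pmf.prob (M n) A) \<longlonglongrightarrow> measure_pmf.prob \<mu> A"
  proof -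
    fix A
    have fA: "finite (A \<inter> Pow P)" using finPow by simp
    have "(\<lambda>n. \<Sum>b\<in>A \<inter> Pow P. pmf (M n) b) \<longlonglongrightarrow> (\<Sum>b\<in>A \<inter> Pow P. m b)"
      by (rule tendsto_sum) (use mlim in auto)
    moreover have "\<And>n. measure_pmf.prob (M n) A = (\<Sum>b\<in>A \<inter> Pow P. pmf (M n) b)"
      by (subst prob_restrict[OF suppP]) (rule measure_measure_pmf_finite[OF fA])
    moreover have "measure_pmf.prob \<mu> A = (\<Sum>b\<in>A \<inter> Pow P. m b)"
      by (subst prob_restrict[OF suppmu], subst measure_measure_pmf_finite[OF fA]) (simp add: pmfmu)
    ultimately show "(\<lambda>n. measure_pmf.prob (M n) A) \<longlonglongrightarrow> measure_pmf.prob \<mu> A" by simp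
  qed
  let ?Q = "\<lambda>\<mu>. \<mu> \<in> Dist R \<and> (\<forall>n. dle R (M n) \<mu>)
                 \<and> (\<forall>\<nu> \<in> Dist R. (\<forall>n. dle R (M n) \<nu>) \<longrightarrow> dle R \<mu> \<nu>)"
  have Qmu: "?Q \<mu>"
  proof (intro conjI ballI allI impI)
    show "\<mu> \<in> Dist R" using suppmu by (simp add: P_def Dist_def)
  next
    fix n show "dle R (M n) \<mu>"
      unfolding dle_def
    proof (intro allI impI)
      fix c show "measure_pmf.prob (M n) {b. c \<subseteq> b} \<le> measure_pmf.prob \<mu> {b. c \<subseteq> b}"
        by (rule incseq_le[OF inc conv])
    qed
  next
    fix \<nu> assume nu: "\<nu> \<in> Dist R" "\<forall>n. dle R (M n) \<nu>"
    show "dle R \<mu> \<nu>"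
      unfolding dle_def
    proof (intro allI impI)
      fix c assume c: "c \<subseteq> Pk R"
      have "\<And>n. measure_pmf.prob (M n) {b. c \<subseteq> b} \<le> measure_pmf.prob \<nu> {b. c \<subseteq> b}"
        using nu(2) c unfolding dle_def by blast
      then show "measure_pmf.prob \<mu> {b. c \<subseteq> b} \<le> measure_pmf.prob \<nu> {b. c \<subseteq> b}"
        by (intro LIMSEQ_le_const2[OF conv]) blast
    qed
  qed
  have uniq: "\<mu>' = \<mu>" if "?Q \<mu>'" for \<mu>'
  proof (rule pmf_eqI)
    fix b
    have s': "set_pmf \<mu>' \<subseteq> Pow P" using that by (simp add: P_def Dist_def)
    have le1: "dle R \<mu> \<mu>'" using Qmu that by blast
    have le2: "dle R \<mu>' \<mu>" using Qmu that by blast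
    show "pmf \<mu>' b = pmf \<mu> b"
    proof (cases "b \<subseteq> P")
      case True
      show ?thesis
      proof (rule pmf_antisym[OF finP s' suppmu _ True])
        fix c assume "c \<subseteq> P"
        then have c: "c \<subseteq> Pk R" by (simp add: P_def)
        have "measure_pmf.prob \<mu>' {x. c \<subseteq> x} \<le> measure_pmf.prob \<mu> {x. c \<subseteq> x}"
          using le2 c unfolding dle_def by blast
        moreover have "measure_pmf.prob \<mu> {x. c \<subseteq> x} \<le> measure_pmf.prob \<mu>' {x. c \<subseteq> x}"
          using le1 c unfolding dle_def by blast
        ultimately show "measure_pmf.prob \<mu>' {x. c \<subseteq> x} = measure_pmf.prob \<mu> {x. c \<subseteq> x}"
          by (rule antisym)
      qed
    next
      case False
      then have "b \<notin> set_pmf \<mu>'" "b \<notin> set_pmf \<mu>" using s' suppmu by auto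
      then show ?thesis by (simp add: set_pmf_iff)
    qed
  qed
  have "dsup R M = \<mu>" unfolding dsup_def
    by (rule the_equality[of ?Q \<mu>, OF Qmu uniq])
  then show ?thesis using Qmu conv by simp
qed

lemma sem_pred_supp: "set_pmf (sem_pred t a) \<subseteq> Pow a"
proof (induction t arbitrary: a)
  case (PSeq t u)
  show ?case
  proof
    fix x assume "x \<in> set_pmf (sem_pred (PSeq t u) a)"
    then obtain y where y: "y \<in> set_pmf (sem_pred t a)" "x \<in> set_pmf (sem_pred u y)" by auto
    then show "x \<in> Pow a" using PSeq.IH by blast
  qed
next
  case (PAnd t u)
  show ?case
  proof
    fix x assume "x \<in> set_pmf (sem_pred (PAnd t u) a)"
    then obtain y z where "y \<in> set_pmf (sem_pred t a)" "z \<in> set_pmf (sem_pred u a)" "x = y \<union> z"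
      by (auto simp: set_pair_pmf)
    then show "x \<in> Pow a" using PAnd.IH[of a] by blast
  qed
qed (auto simp: set_pair_pmf)

lemma sem_supp_and_star:
  assumes fin: "finite (Pk R)"
  shows "wf_prog R p \<Longrightarrow> a \<subseteq> Pk R \<Longrightarrow> set_pmf (sem R p a) \<subseteq> Pow (Pk R)"
proof (induction p arbitrary: a)
  case (Test t)
  then show ?case using sem_pred_supp[of t a] by auto
next
  case (Assign f n)
  then show ?case by (auto simp: Pk_def)
next
  case (Par p q)
  show ?case
  proof
    fix x assume "x \<in> set_pmf (sem R (Par p q) a)"
    then obtain y z where "y \<in> set_pmf (sem R p a)" "z \<in> set_pmf (sem R q a)" "x = y \<union> z"
      by (auto simp: set_pair_pmf)
    moreover have "set_pmf (sem R p a) \<subseteq> Pow (Pk R)" "set_pmf (sem R q a) \<subseteq> Pow (Pk R)"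
      using Par by simp_all
    ultimately show "x \<in> Pow (Pk R)" by blast
  qed
next
  case (Seq p q)
  show ?case
  proof
    fix x assume "x \<in> set_pmf (sem R (Seq p q) a)"
    then obtain y where y: "y \<in> set_pmf (sem R p a)" "x \<in> set_pmf (sem R q y)" by auto
    have "set_pmf (sem R p a) \<subseteq> Pow (Pk R)" using Seq by simp
    then have "y \<subseteq> Pk R" using y(1) by blast
    then have "set_pmf (sem R q y) \<subseteq> Pow (Pk R)" using Seq by simp
    then show "x \<in> Pow (Pk R)" using y(2) by blast
  qed
next
  case (Choice p r q)
  have "set_pmf (sem R p a) \<subseteq> Pow (Pk R)" "set_pmf (sem R q a) \<subseteq> Pow (Pk R)"
    using Choice by simp_all
  then show ?case by (auto split: if_splits) blast+
next
  case (Star p)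
  have sp: "set_pmf (star_approx (sem R p) n a) \<subseteq> Pow (Pk R)" for n
    by (rule star_approx_supp) (use Star in auto)
  have "dsup R (\<lambda>n. star_approx (sem R p) n a) \<in> Dist R"
    using chain_lemma[of R "\<lambda>n. star_approx (sem R p) n a", OF fin sp star_approx_mono] by blast
  then show ?case by (simp add: Dist_def)
qed

lemma sem_ppow: "sem R (ppow p n) = star_approx (sem R p) n"
  by (induction n) (simp, rule ext, simp)

theorem lemmaA2:
  fixes R :: "'f::finite \<Rightarrow> nat set"
    and p :: "'f prog"
    and a :: "'f packet set"
    and A :: "'f packet set set"
  assumes "valid_ranges R"
    and "wf_prog R p"
    and "a \<subseteq> Pk R"
    and "A \<subseteq> Pow (Pk R)"
  shows "(\<lambda>n. measure_pmf.prob (sem R (ppow p n) a) A)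
           \<longlonglongrightarrow> measure_pmf.prob (sem R (Star p) a) A"
proof -
  have fin: "finite (Pk R)" by (rule finite_Pk[OF assms(1)])
  have "set_pmf (star_approx (sem R p) n a) \<subseteq> Pow (Pk R)" for n
    by (rule star_approx_supp) (use sem_supp_and_star[OF fin] assms in auto)
  note ch = chain_lemma[of R "\<lambda>n. star_approx (sem R p) n a", OF fin this star_approx_mono]
  show ?thesis unfolding sem_ppow sem.simps using ch by blast
qed

end
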